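(* Let $P$ be a finite $2$-group such that $P/Z(P)$ is elementary abelian. Then $(xy)^4=x^4y^4$ for all $x,y\in P$, and in particular $\Omega_2(P)$ has exponent at most $4$. Furthermore, if $B$ is a group of automorphisms of $P$ of odd order with $[\Omega_2(P),B]=1$, then $B=1$.
   Context: $\Omega_2(P)$ denotes the subgroup of $P$ generated by the elements of order at most $4$. $[\Omega_2(P),B]=1$ means every element of $B$ fixes every element of $\Omega_2(P)$. *)

theory Defs
  imports "HOL-Algebra.Algebra"
begin

definition center :: "('a, 'b) monoid_scheme \<Rightarrow> 'a set" where
  "center G = {z \<in> carrier G. \<forall>x \<in> carrier G. z \<otimes>\<^bsub>G\<^esub> x = x \<otimes>\<^bsub>G\<^esub> z}"

definition elementary_abelian :: "nat \<Rightarrow> ('a, 'b) monoid_scheme \<Rightarrow> bool" where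
  "elementary_abelian p G \<longleftrightarrow> comm_group G \<and> (\<forall>a \<in> carrier G. a [^]\<^bsub>G\<^esub> p = \<one>\<^bsub>G\<^esub>)"

definition Omega2 :: "('a, 'b) monoid_scheme \<Rightarrow> 'a set" where
  "Omega2 G = generate G {x \<in> carrier G. group.ord G x \<le> 4}"

end

theory Submission
  imports Defs
begin

lemma not3: "\<not> (3::nat) dvd 2 ^ n"
proof
  assume "(3::nat) dvd 2 ^ n"
  moreover have "Factorial_Ring.prime (3::nat)"
  proof -
    have "{2..<3::nat} = {2}" by auto
    thus ?thesis unfolding prime_nat_iff' by simp
  qed
  ultimately have "(3::nat) dvd 2" using prime_dvd_power by blast
  thus False by simp
qed

lemma odd_dvd4: "(d::nat) dvd 4 \<Longrightarrow> d dvd m \<Longrightarrow> odd m \<Longrightarrow> d = 1"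
proof -
  assume a: "d dvd 4" "d dvd m" "odd m"
  have "d \<le> 4" using a(1) by (rule dvd_imp_le) simp
  hence "d \<in> {0,1,2,3,4}" by auto
  moreover have "d \<noteq> 0" using a(1) by (metis dvd_0_left_iff zero_neq_numeral)
  moreover have "d \<noteq> 3" using a(1) by auto
  moreover have "d \<noteq> 2" using a(2,3) by auto
  moreover have "d \<noteq> 4" using a(2,3) dvd_trans[of "2::nat" 4 m] by auto
  ultimately show "d = 1" by auto
qed

context group
begin

lemma center_comm: "z \<in> center G \<Longrightarrow> x \<in> carrier G \<Longrightarrow> z \<otimes> x = x \<otimes> z"
  by (simp add: center_def)

lemma center_carrier: "z \<in> center G \<Longrightarrow> z \<in> carrier G"
  by (simp add: center_def)

lemma center_subgroup: "subgroup (center G) G"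
proof (rule subgroupI)
  show "center G \<subseteq> carrier G" by (auto simp: center_def)
  show "center G \<noteq> {}" by (auto simp: center_def)
next
  fix a assume a: "a \<in> center G"
  have ac: "a \<in> carrier G" using a by (simp add: center_def)
  show "inv a \<in> center G"
    unfolding center_def
  proof (safe)
    show "inv a \<in> carrier G" using ac by simp
    fix x assume x: "x \<in> carrier G"
    have "a \<otimes> inv x = inv x \<otimes> a" using a x by (simp add: center_def)
    hence "inv (a \<otimes> inv x) = inv (inv x \<otimes> a)" by simp
    thus "inv a \<otimes> x = x \<otimes> inv a" using ac x by (simp add: inv_mult_group)
  qed
next
  fix a b assume a: "a \<in> center G" and b: "b \<in> center G"
  have ac: "a \<in> carrier G" and bc: "b \<in> carrier G" using a b by (auto simp: center_def)
  show "a \<otimes> b \<in> center G"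
    unfolding center_def
  proof (safe)
    show "a \<otimes> b \<in> carrier G" using ac bc by simp
    fix x assume x: "x \<in> carrier G"
    have bx: "b \<otimes> x = x \<otimes> b" using b x by (simp add: center_def)
    have ax: "a \<otimes> x = x \<otimes> a" using a x by (simp add: center_def)
    have "a \<otimes> b \<otimes> x = a \<otimes> (x \<otimes> b)" using ac bc x bx by (simp add: m_assoc)
    also have "\<dots> = (a \<otimes> x) \<otimes> b" using ac bc x by (simp add: m_assoc)
    also have "\<dots> = x \<otimes> (a \<otimes> b)" using ac bc x ax by (simp add: m_assoc)
    finally show "a \<otimes> b \<otimes> x = x \<otimes> (a \<otimes> b)" .
  qed
qed

lemma center_normal: "center G \<lhd> G"
proof -
  have "\<forall>x \<in> carrier G. \<forall>h \<in> center G. x \<otimes> h \<otimes> inv x \<in> center G"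
  proof (intro ballI)
    fix x h assume x: "x \<in> carrier G" and h: "h \<in> center G"
    have hc: "h \<in> carrier G" using h by (simp add: center_def)
    have "x \<otimes> h \<otimes> inv x = h \<otimes> x \<otimes> inv x" using h x by (simp add: center_def)
    also have "\<dots> = h" using hc x by (simp add: m_assoc)
    finally show "x \<otimes> h \<otimes> inv x \<in> center G" using h by simp
  qed
  thus ?thesis using center_subgroup normal_inv_iff by blast
qed

lemma pow4: "a \<in> carrier G \<Longrightarrow> a [^] (4::nat) = a \<otimes> a \<otimes> (a \<otimes> a)"
  by (simp add: numeral_eq_Suc m_assoc)

lemma center_lcomm: "z \<in> center G \<Longrightarrow> x \<in> carrier G \<Longrightarrow> w \<in> carrier G
   \<Longrightarrow> x \<otimes> (z \<otimes> w) = z \<otimes> (x \<otimes> w)"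
  by (metis center_carrier center_comm m_assoc)

lemma part1:
  assumes sq: "\<forall>x\<in>carrier G. x \<otimes> x \<in> center G"
    and cm: "\<forall>x\<in>carrier G. \<forall>y\<in>carrier G. \<exists>c\<in>center G. y \<otimes> x = c \<otimes> (x \<otimes> y)"
    and x: "x \<in> carrier G" and y: "y \<in> carrier G"
  shows "(x \<otimes> y) [^] (4::nat) = x [^] (4::nat) \<otimes> y [^] (4::nat)"
proof -
  obtain c where c: "c \<in> center G" and yx: "y \<otimes> x = c \<otimes> (x \<otimes> y)" using cm x y by blast
  have cc: "c \<in> carrier G" using c by (rule center_carrier)
  define XX where "XX = x \<otimes> x"
  define YY where "YY = y \<otimes> y"
  have XXZ: "XX \<in> center G" using sq x by (simp add: XX_def)
  have YYZ: "YY \<in> center G" using sq y by (simp add: YY_def)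
  have Xc: "XX \<in> carrier G" and Yc: "YY \<in> carrier G" using x y by (auto simp: XX_def YY_def)
  have "y \<otimes> (x \<otimes> x) = (y \<otimes> x) \<otimes> x" using x y by (simp add: m_assoc)
  also have "\<dots> = (c \<otimes> (x \<otimes> y)) \<otimes> x" using yx by simp
  also have "\<dots> = c \<otimes> (x \<otimes> (y \<otimes> x))" using x y cc by (simp add: m_assoc)
  also have "\<dots> = c \<otimes> (x \<otimes> (c \<otimes> (x \<otimes> y)))" using yx by simp
  also have "\<dots> = c \<otimes> (c \<otimes> (x \<otimes> (x \<otimes> y)))" using center_lcomm[OF c x, of "x \<otimes> y"] x y by simp
  also have "\<dots> = (c \<otimes> c) \<otimes> ((x \<otimes> x) \<otimes> y)" using x y cc by (simp add: m_assoc)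
  finally have B: "y \<otimes> XX = (c \<otimes> c) \<otimes> (XX \<otimes> y)" by (simp add: XX_def)
  have A: "y \<otimes> XX = XX \<otimes> y" using center_comm[OF XXZ y] by simp
  have "(c \<otimes> c) \<otimes> (XX \<otimes> y) = \<one> \<otimes> (XX \<otimes> y)" using A B Xc y by simp
  hence c2: "c \<otimes> c = \<one>" using r_cancel Xc y cc by (metis m_closed one_closed)
  have "(x \<otimes> y) \<otimes> (x \<otimes> y) = x \<otimes> ((y \<otimes> x) \<otimes> y)" using x y by (simp add: m_assoc)
  also have "\<dots> = x \<otimes> ((c \<otimes> (x \<otimes> y)) \<otimes> y)" using yx by simp
  also have "\<dots> = x \<otimes> (c \<otimes> (x \<otimes> (y \<otimes> y)))" using x y cc by (simp add: m_assoc)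
  also have "\<dots> = c \<otimes> (x \<otimes> (x \<otimes> (y \<otimes> y)))" using center_lcomm[OF c x, of "x \<otimes> (y \<otimes> y)"] x y by simp
  also have "\<dots> = c \<otimes> (XX \<otimes> YY)" using x y by (simp add: m_assoc XX_def YY_def)
  finally have D: "(x \<otimes> y) \<otimes> (x \<otimes> y) = c \<otimes> (XX \<otimes> YY)" .
  have "(x \<otimes> y) [^] (4::nat) = (c \<otimes> (XX \<otimes> YY)) \<otimes> (c \<otimes> (XX \<otimes> YY))"
    using pow4[of "x \<otimes> y"] x y D by simp
  also have "\<dots> = c \<otimes> (XX \<otimes> (YY \<otimes> (c \<otimes> (XX \<otimes> YY))))" using Xc Yc cc by (simp add: m_assoc)
  also have "\<dots> = c \<otimes> (XX \<otimes> (c \<otimes> (YY \<otimes> (XX \<otimes> YY))))" using center_lcomm[OF c Yc, of "XX \<otimes> YY"] Xc Yc by simp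
  also have "\<dots> = c \<otimes> (c \<otimes> (XX \<otimes> (YY \<otimes> (XX \<otimes> YY))))" using center_lcomm[OF c Xc, of "YY \<otimes> (XX \<otimes> YY)"] Xc Yc by simp
  also have "\<dots> = (c \<otimes> c) \<otimes> (XX \<otimes> ((YY \<otimes> XX) \<otimes> YY))" using Xc Yc cc by (simp add: m_assoc)
  also have "\<dots> = XX \<otimes> ((XX \<otimes> YY) \<otimes> YY)" using c2 center_comm[OF XXZ Yc] Xc Yc by simp
  also have "\<dots> = (XX \<otimes> XX) \<otimes> (YY \<otimes> YY)" using Xc Yc by (simp add: m_assoc)
  also have "\<dots> = x [^] (4::nat) \<otimes> y [^] (4::nat)" using pow4 x y by (simp add: XX_def YY_def)
  finally show ?thesis .
qed

end


lemma (in group) main_lemma: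
  assumes "finite (carrier G)"
    and "\<exists>n::nat. order G = 2 ^ n"
    and "elementary_abelian 2 (G Mod center G)"
  shows "(\<forall>x \<in> carrier G. \<forall>y \<in> carrier G.
            (x \<otimes> y) [^] (4::nat) = x [^] (4::nat) \<otimes> y [^] (4::nat))
       \<and> (\<forall>g \<in> Omega2 G. g [^] (4::nat) = \<one>)
       \<and> (\<forall>B. subgroup B (AutoGroup G) \<and> odd (card B)
               \<and> (\<forall>b \<in> B. \<forall>x \<in> Omega2 G. b x = x)
             \<longrightarrow> B = {\<one>\<^bsub>AutoGroup G\<^esub>})"
proof -
  obtain n where ordP: "order G = 2 ^ n" using assms(2) by blast
  define Z where "Z = center G"
  have nZ: "Z \<lhd> G" unfolding Z_def by (rule center_normal)
  have sZ: "subgroup Z G" using nZ by (simp add: normal_def)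
  interpret Q: comm_group "G Mod Z" using assms(3) by (simp add: elementary_abelian_def Z_def)
  have ex2: "\<forall>a\<in>carrier (G Mod Z). a [^]\<^bsub>G Mod Z\<^esub> (2::nat) = Z"
    using assms(3) by (simp add: elementary_abelian_def Z_def)
  have cQ: "Z #> x \<in> carrier (G Mod Z)" if "x \<in> carrier G" for x
    using that by (simp add: carrier_FactGroup)
  have sq: "\<forall>x\<in>carrier G. x \<otimes> x \<in> center G"
  proof
    fix x assume x: "x \<in> carrier G"
    have "Z = (Z #> x) [^]\<^bsub>G Mod Z\<^esub> (2::nat)" using ex2 cQ[OF x] by simp
    also have "\<dots> = (Z #> x) <#> (Z #> x)" using cQ[OF x] Q.l_one[OF cQ[OF x]] by (simp add: numeral_2_eq_2)
    also have "\<dots> = Z #> (x \<otimes> x)" using x normal.rcos_sum[OF nZ] by simp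
    finally have "Z #> (x \<otimes> x) = Z" by simp
    moreover have "x \<otimes> x \<in> Z #> (x \<otimes> x)" using x sZ rcos_self by simp
    ultimately show "x \<otimes> x \<in> center G" by (simp add: Z_def)
  qed
  have cm: "\<forall>x\<in>carrier G. \<forall>y\<in>carrier G. \<exists>c\<in>center G. y \<otimes> x = c \<otimes> (x \<otimes> y)"
  proof (intro ballI)
    fix x y assume x: "x \<in> carrier G" and y: "y \<in> carrier G"
    have "Z #> (x \<otimes> y) = (Z #> x) <#> (Z #> y)" using x y normal.rcos_sum[OF nZ] by simp
    also have "\<dots> = (Z #> x) \<otimes>\<^bsub>G Mod Z\<^esub> (Z #> y)" by simp
    also have "\<dots> = (Z #> y) \<otimes>\<^bsub>G Mod Z\<^esub> (Z #> x)" using Q.m_comm cQ x y by blast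
    also have "\<dots> = Z #> (y \<otimes> x)" using x y normal.rcos_sum[OF nZ] by simp
    finally have "Z #> (x \<otimes> y) = Z #> (y \<otimes> x)" .
    moreover have "y \<otimes> x \<in> Z #> (y \<otimes> x)" using x y sZ rcos_self by simp
    ultimately have "y \<otimes> x \<in> Z #> (x \<otimes> y)" by simp
    thus "\<exists>c\<in>center G. y \<otimes> x = c \<otimes> (x \<otimes> y)" by (auto simp: r_coset_def Z_def)
  qed
  have P1: "\<forall>x \<in> carrier G. \<forall>y \<in> carrier G.
            (x \<otimes> y) [^] (4::nat) = x [^] (4::nat) \<otimes> y [^] (4::nat)"
    using part1[OF sq cm] by blast
  define H where "H = {g \<in> carrier G. g [^] (4::nat) = \<one>}"
  have sH: "subgroup H G"
  proof (rule subgroupI)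
    show "H \<subseteq> carrier G" by (auto simp: H_def)
    show "H \<noteq> {}" by (auto simp: H_def)
  next
    fix a assume "a \<in> H" thus "inv a \<in> H" by (simp add: H_def nat_pow_inv)
  next
    fix a b assume "a \<in> H" "b \<in> H" thus "a \<otimes> b \<in> H" using P1 by (simp add: H_def)
  qed
  have gen: "x [^] (4::nat) = \<one>" if x: "x \<in> carrier G" and o: "ord x \<le> 4" for x
  proof -
    have d: "ord x dvd 2 ^ n" using ord_dvd_group_order[OF x] ordP by simp
    have "ord x dvd 4"
    proof -
      have "ord x \<in> {0,1,2,3,4}" using o by auto
      moreover have "ord x \<noteq> 0" using d by (metis dvd_0_left_iff power_not_zero zero_neq_numeral)
      moreover have "ord x \<noteq> 3"
      proof
        assume "ord x = 3"
        hence "(3::nat) dvd 2 ^ n" using d by simp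
        thus False using not3 by blast
      qed
      ultimately show ?thesis by auto
    qed
    thus ?thesis using pow_eq_id[OF x] by simp
  qed
  have OmH: "Omega2 G \<subseteq> H"
    unfolding Omega2_def
    by (rule generate_subgroup_incl[OF _ sH]) (auto simp: H_def gen)
  have P2: "\<forall>g \<in> Omega2 G. g [^] (4::nat) = \<one>" using OmH by (auto simp: H_def)
  have P3: "B = {\<one>\<^bsub>AutoGroup G\<^esub>}"
    if sB: "subgroup B (AutoGroup G)" and oB: "odd (card B)" and fixB: "\<forall>b \<in> B. \<forall>x \<in> Omega2 G. b x = x" for B
  proof -
    let ?A = "AutoGroup G"
    have gA: "group ?A" by (rule AutoGroup)
    have mA: "monoid ?A" using gA by (rule group.is_monoid)
    have carA: "carrier ?A = auto G" by (simp add: AutoGroup_def)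
    have Bsub: "B \<subseteq> auto G" using subgroup.subset[OF sB] carA by simp
    have mulA: "(f \<otimes>\<^bsub>?A\<^esub> g) x = f (g x)"
      if "f \<in> auto G" "g \<in> auto G" "x \<in> carrier G" for f g x
      using that by (simp add: AutoGroup_def BijGroup_def auto_def compose_def)
    have oneA: "\<one>\<^bsub>?A\<^esub> = (\<lambda>x\<in>carrier G. x)" by (simp add: AutoGroup_def BijGroup_def)
    have powB: "b [^]\<^bsub>?A\<^esub> card B = \<one>\<^bsub>?A\<^esub>" if b: "b \<in> B" for b
    proof -
      interpret BB: group "?A\<lparr>carrier := B\<rparr>" by (rule subgroup.subgroup_is_group[OF sB gA])
      have "b [^]\<^bsub>?A\<lparr>carrier := B\<rparr>\<^esub> (order (?A\<lparr>carrier := B\<rparr>)) = \<one>\<^bsub>?A\<lparr>carrier := B\<rparr>\<^esub>"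
        using BB.pow_order_eq_1 b by simp
      thus ?thesis using monoid.nat_pow_consistent[OF mA] by (simp add: order_def)
    qed
    have fixall: "b x = x" if b: "b \<in> B" and x: "x \<in> carrier G" for b x
    proof -
      have bA: "b \<in> auto G" using Bsub b by blast
      have bh: "b \<in> hom G G" using bA by (simp add: auto_def)
      have bcar: "b u \<in> carrier G" if "u \<in> carrier G" for u using bh that by (auto simp: hom_def)
      have step: "\<forall>x\<in>carrier G. x [^] ((4::nat)^k) = \<one> \<longrightarrow> b x = x" for k
      proof (induction k)
        case 0
        show ?case using hom_one[OF bh is_group is_group] by auto
      next
        case (Suc k)
        show ?case
        proof (intro ballI impI)
          fix x assume x: "x \<in> carrier G" and e: "x [^] ((4::nat)^(Suc k)) = \<one>"
          have "(x [^] (4::nat)) [^] ((4::nat)^k) = \<one>" using e x by (simp add: nat_pow_pow)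
          hence b4: "b (x [^] (4::nat)) = x [^] (4::nat)" using Suc.IH x by simp
          define z where "z = inv x \<otimes> b x"
          have zc: "z \<in> carrier G" using x bcar by (simp add: z_def)
          have "z [^] (4::nat) = inv x [^] (4::nat) \<otimes> b x [^] (4::nat)"
            using P1 x bcar[OF x] by (simp add: z_def)
          also have "\<dots> = inv (x [^] (4::nat)) \<otimes> b (x [^] (4::nat))"
            using x hom_nat_pow[OF bh x is_group is_group] by (simp add: nat_pow_inv)
          also have "\<dots> = \<one>" using b4 x by simp
          finally have z4: "z [^] (4::nat) = \<one>" .
          have oz4: "ord z dvd 4" using z4 pow_eq_id[OF zc] by simp
          have "ord z \<le> 4" using oz4 by (simp add: dvd_imp_le)
          hence zO: "z \<in> Omega2 G" unfolding Omega2_def using zc by (auto intro: generate.incl)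
          have bz: "b z = z" using fixB b zO by blast
          have bx: "b x = x \<otimes> z" using x bcar[OF x] by (simp add: z_def m_assoc[symmetric])
          have iter: "(b [^]\<^bsub>?A\<^esub> m) x = x \<otimes> z [^] m" for m :: nat
          proof (induction m)
            case 0
            show ?case using x oneA by simp
          next
            case (Suc m)
            have bA': "b \<in> carrier ?A" using bA carA by simp
            have pm: "b [^]\<^bsub>?A\<^esub> m \<in> auto G" using monoid.nat_pow_closed[OF mA bA'] carA by simp
            have "(b [^]\<^bsub>?A\<^esub> Suc m) x = (b \<otimes>\<^bsub>?A\<^esub> b [^]\<^bsub>?A\<^esub> m) x"
              using monoid.nat_pow_Suc2[OF mA bA'] by simp
            also have "\<dots> = b ((b [^]\<^bsub>?A\<^esub> m) x)" using mulA[OF bA pm x] .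
            also have "\<dots> = b (x \<otimes> z [^] m)" using Suc.IH by simp
            also have "\<dots> = b x \<otimes> b (z [^] m)" using hom_mult[OF bh] x zc by simp
            also have "\<dots> = x \<otimes> z \<otimes> z [^] m" using bx bz hom_nat_pow[OF bh zc is_group is_group] by simp
            also have "\<dots> = x \<otimes> z [^] Suc m" using x zc by (metis m_assoc nat_pow_Suc2 nat_pow_closed)
            finally show ?case .
          qed
          have "x \<otimes> z [^] card B = x \<otimes> \<one>" using iter[of "card B"] powB[OF b] oneA x by simp
          hence zm: "z [^] card B = \<one>" using x zc l_cancel by (metis nat_pow_closed one_closed)
          have "ord z dvd card B" using zm pow_eq_id[OF zc] by simp
          hence "ord z = 1" using oz4 oB odd_dvd4 by blast
          hence "z = \<one>" using pow_eq_id[OF zc, of 1] zc by simp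
          thus "b x = x" using bx x by simp
        qed
      qed
      have "ord x dvd 2 ^ n" using ord_dvd_group_order[OF x] ordP by simp
      moreover have "(2::nat) ^ n dvd 4 ^ n" by (rule dvd_power_same) simp
      ultimately have "x [^] ((4::nat)^n) = \<one>" using pow_eq_id[OF x] dvd_trans by blast
      thus ?thesis using step[of n] x by blast
    qed
    show ?thesis
    proof
      show "B \<subseteq> {\<one>\<^bsub>?A\<^esub>}"
      proof
        fix b assume b: "b \<in> B"
        have "b \<in> extensional (carrier G)" using Bsub b by (auto simp: auto_def Bij_def)
        hence "b = (\<lambda>x\<in>carrier G. x)" using fixall[OF b] by (auto simp: extensional_def)
        thus "b \<in> {\<one>\<^bsub>?A\<^esub>}" using oneA by simp
      qed
      show "{\<one>\<^bsub>?A\<^esub>} \<subseteq> B" using subgroup.one_closed[OF sB] by simp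
    qed
  qed
  show ?thesis using P1 P2 P3 by blast
qed

theorem lemma2p2:
  fixes P :: "('a, 'b) monoid_scheme"
  assumes "group P"
    and "finite (carrier P)"
    and "\<exists>n::nat. order P = 2 ^ n"
    and "elementary_abelian 2 (P Mod center P)"
  shows "(\<forall>x \<in> carrier P. \<forall>y \<in> carrier P.
            (x \<otimes>\<^bsub>P\<^esub> y) [^]\<^bsub>P\<^esub> (4::nat) = x [^]\<^bsub>P\<^esub> (4::nat) \<otimes>\<^bsub>P\<^esub> y [^]\<^bsub>P\<^esub> (4::nat))
       \<and> (\<forall>g \<in> Omega2 P. g [^]\<^bsub>P\<^esub> (4::nat) = \<one>\<^bsub>P\<^esub>)
       \<and> (\<forall>B. subgroup B (AutoGroup P) \<and> odd (card B)
               \<and> (\<forall>b \<in> B. \<forall>x \<in> Omega2 P. b x = x)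
             \<longrightarrow> B = {\<one>\<^bsub>AutoGroup P\<^esub>})"
  by (rule group.main_lemma[OF assms])

end
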